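(* Let $H_\alpha=-\Delta_\alpha+V$ be the Schrödinger operator with a periodic magnetic potential $\alpha$ and a periodic electric potential $V$ on a periodic graph $\mathcal G$. Then all spectral bands of $H_\alpha$ are degenerate (i.e. each is a single point) if and only if $\mathcal T_{\alpha,n,\mathrm m}=0$ for all $(n,\mathrm m)\in\{1,\dots,\nu\}\times(\mathbb Z^d\setminus\{0\})$, where $\mathcal T_{\alpha,n,\mathrm m}=\sum_{\mathbf c\in\widetilde{\mathcal C}_n^{\mathrm m}}\omega(\mathbf c)e^{-i\alpha(\mathbf c)}$.
   Context: Let $\Gamma\subset\mathbb R^d$ be a lattice with basis $\mathfrak a_1,\dots,\mathfrak a_d$ and fundamental cell $\Omega=\{\sum_sx_s\mathfrak a_s:(x_s)\in[0,1)^d\}$. Let $\mathcal G=(\mathcal V,\mathcal E)$ be a connected, locally finite, infinite graph embedded in $\mathbb R^d$ (loops, multiple edges allowed), invariant under $\Gamma$-translations, with finite quotient $\mathcal G_*=(\mathcal V_*,\mathcal E_* )$; $\nu=\#\mathcal V_*$. Oriented edges $\mathcal A,\mathcal A_*$; $\underline{\mathbf e}$ inverse; $\varkappa_x$ = number of oriented edges starting at $x$. Edge index: $x=x_0+[x]$, $x_0\in\mathcal V\cap\Omega$, $[x]\in\Gamma$ with coordinates $[x]_{\mathbb A}\in\mathbb Z^d$; $\tau((x,y))=[y]_{\mathbb A}-[x]_{\mathbb A}$, defined on $\mathcal A_*$. Periodic magnetic potential $\alpha:\mathcal A\to\mathbb R$ ($\alpha(\underline{\mathbf e})=-\alpha(\mathbf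 e)$, $\Gamma$-invariant); $V$ real $\Gamma$-periodic. $H_\alpha=-\Delta_\alpha+V$, $\Delta_\alpha=\varkappa-A_\alpha$, $(A_\alpha f)_x=\sum_{\mathbf e=(x,y)\in\mathcal A}e^{i\alpha(\mathbf e)}f_y$. Fiber operators $H_\alpha(k)=A_\alpha(k)-\varkappa+V$ on $\mathbb C^\nu$, $(A_\alpha(k)f)_x=\sum_{\mathbf e=(x,y)\in\mathcal A_*}e^{i(\alpha(\mathbf e)+\langle\tau(\mathbf e),k\rangle)}f_y$, $k\in\mathbb T^d=\mathbb R^d/(2\pi\mathbb Z)^d$, eigenvalues $\lambda_{\alpha,1}(k)\le\dots\le\lambda_{\alpha,\nu}(k)$; spectral bands $\sigma_j(H_\alpha)=\lambda_{\alpha,j}(\mathbb T^d)$. Cycles: ordered sequences of oriented edges $(\mathbf e_1,\dots,\mathbf e_n)$, $\mathbf e_s=(x_{s-1},x_s)$, $x_n=x_0$ (cyclic shifts distinct, backtracking allowed); index $\tau(\mathbf c)=\sum\tau(\mathbf e)$, flux $\alpha(\mathbf c)=(\sum\alpha(\mathbf e))\bmod2\pi$. Modified graph $\widetilde{\mathcal G}_*$: add at each $x\in\mathcal V_*$ one oriented loop $\mathbf e_x$ (single oriented edge) with $\tau(\mathbf e_x)=0$, $\alpha(\mathbf e_x)=0$; $\omega(\mathbf e)=1$ for $\mathbf e\in\mathcal A_*$, $\omega(\mathbf e_x)=V_x-\varkappa_x$, $\omega(\mathbf c)=\prod_s\omega(\mathbf e_s)$; $\widetilde{\mathcal C}_n^{\mathrm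 m}$ is the set of cycles of $\widetilde{\mathcal G}_*$ of length $n$ and index $\mathrm m$. *)

theory Defs
  imports "Jordan_Normal_Form.Char_Poly" "HOL-Library.Multiset"
    "HOL-Computational_Algebra.Polynomial"
begin

text \<open>
 Data of a Gamma-periodic graph, given through its finite quotient:
 vertices of the quotient are 0..<nu, oriented edges of the quotient form the
 finite set E, with source/target maps src, tgt, inversion inv,
 edge index tau (values in Z^d, d = CARD('d)), magnetic potential alpha,
 electric potential V.  Quasimomenta k are in R^d (the bands are images of
 2pi-periodic functions, so ranging over R^d or T^d gives the same sets).
\<close>

definition inner_ik :: "('d::finite \<Rightarrow> int) \<Rightarrow> ('d \<Rightarrow> real) \<Rightarrow> real" where
  "inner_ik m k = (\<Sum>i\<in>UNIV. of_int (m i) * k i)"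

definition kappa :: "'e set \<Rightarrow> ('e \<Rightarrow> nat) \<Rightarrow> nat \<Rightarrow> nat" where
  "kappa E src x = card {e\<in>E. src e = x}"

definition periodic_rel ::
  "'e set \<Rightarrow> ('e \<Rightarrow> nat) \<Rightarrow> ('e \<Rightarrow> nat) \<Rightarrow> ('e \<Rightarrow> 'd::finite \<Rightarrow> int)
   \<Rightarrow> ((nat \<times> ('d \<Rightarrow> int)) \<times> (nat \<times> ('d \<Rightarrow> int))) set" where
  "periodic_rel E src tgt tau =
     {((src e, a), (tgt e, (\<lambda>i. a i + tau e i))) | e a. e \<in> E}"

definition periodic_connected ::
  "nat \<Rightarrow> 'e set \<Rightarrow> ('e \<Rightarrow> nat) \<Rightarrow> ('e \<Rightarrow> nat) \<Rightarrow> ('e \<Rightarrow> 'd::finite \<Rightarrow> int) \<Rightarrow> bool" where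
  "periodic_connected nu E src tgt tau \<longleftrightarrow>
     (\<forall>x y a b. x < nu \<longrightarrow> y < nu \<longrightarrow>
        ((x, a), (y, b)) \<in> (periodic_rel E src tgt tau)\<^sup>*)"

definition fiber_op ::
  "nat \<Rightarrow> 'e set \<Rightarrow> ('e \<Rightarrow> nat) \<Rightarrow> ('e \<Rightarrow> nat) \<Rightarrow> ('e \<Rightarrow> 'd::finite \<Rightarrow> int)
   \<Rightarrow> ('e \<Rightarrow> real) \<Rightarrow> (nat \<Rightarrow> real) \<Rightarrow> ('d \<Rightarrow> real) \<Rightarrow> complex mat" where
  "fiber_op nu E src tgt tau alpha V k =
     mat nu nu (\<lambda>(x, y).
        (\<Sum>e\<in>{e\<in>E. src e = x \<and> tgt e = y}. cis (alpha e + inner_ik (tau e) k))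
        + (if x = y then complex_of_real (V x - real (kappa E src x)) else 0))"

text \<open>lambda_{alpha,j}(k), j = 1..nu: the eigenvalues of the (Hermitian) fiber
 operator, counted with multiplicity and sorted increasingly.\<close>
definition band_fun ::
  "nat \<Rightarrow> 'e set \<Rightarrow> ('e \<Rightarrow> nat) \<Rightarrow> ('e \<Rightarrow> nat) \<Rightarrow> ('e \<Rightarrow> 'd::finite \<Rightarrow> int)
   \<Rightarrow> ('e \<Rightarrow> real) \<Rightarrow> (nat \<Rightarrow> real) \<Rightarrow> nat \<Rightarrow> ('d \<Rightarrow> real) \<Rightarrow> real" where
  "band_fun nu E src tgt tau alpha V j k =
     sorted_list_of_multiset
       (image_mset Re (proots (char_poly (fiber_op nu E src tgt tau alpha V k)))) ! (j - 1)"

definition band ::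
  "nat \<Rightarrow> 'e set \<Rightarrow> ('e \<Rightarrow> nat) \<Rightarrow> ('e \<Rightarrow> nat) \<Rightarrow> ('e \<Rightarrow> 'd::finite \<Rightarrow> int)
   \<Rightarrow> ('e \<Rightarrow> real) \<Rightarrow> (nat \<Rightarrow> real) \<Rightarrow> nat \<Rightarrow> real set" where
  "band nu E src tgt tau alpha V j = range (band_fun nu E src tgt tau alpha V j)"

text \<open>Modified quotient graph: oriented edges Inl e (e in E) and the added
 loops Inr x (x in V_*).\<close>
definition medges :: "nat \<Rightarrow> 'e set \<Rightarrow> ('e + nat) set" where
  "medges nu E = Inl ` E \<union> Inr ` {..<nu}"

fun msrc :: "('e \<Rightarrow> nat) \<Rightarrow> 'e + nat \<Rightarrow> nat" where
  "msrc src (Inl e) = src e" | "msrc src (Inr x) = x"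

fun mtau :: "('e \<Rightarrow> 'd \<Rightarrow> int) \<Rightarrow> 'e + nat \<Rightarrow> 'd \<Rightarrow> int" where
  "mtau tau (Inl e) = tau e" | "mtau tau (Inr x) = (\<lambda>_. 0)"

fun malpha :: "('e \<Rightarrow> real) \<Rightarrow> 'e + nat \<Rightarrow> real" where
  "malpha alpha (Inl e) = alpha e" | "malpha alpha (Inr x) = 0"

fun momega :: "'e set \<Rightarrow> ('e \<Rightarrow> nat) \<Rightarrow> (nat \<Rightarrow> real) \<Rightarrow> 'e + nat \<Rightarrow> real" where
  "momega E src V (Inl e) = 1"
| "momega E src V (Inr x) = V x - real (kappa E src x)"

definition mcycles ::
  "nat \<Rightarrow> 'e set \<Rightarrow> ('e \<Rightarrow> nat) \<Rightarrow> ('e \<Rightarrow> nat) \<Rightarrow> ('e \<Rightarrow> 'd \<Rightarrow> int)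
   \<Rightarrow> nat \<Rightarrow> ('d \<Rightarrow> int) \<Rightarrow> ('e + nat) list set" where
  "mcycles nu E src tgt tau n m =
     {c. length c = n \<and> set c \<subseteq> medges nu E
         \<and> (\<forall>s<n. msrc tgt (c ! s) = msrc src (c ! ((s + 1) mod n)))
         \<and> (\<lambda>i. \<Sum>s<n. mtau tau (c ! s) i) = m}"

definition Tcoef ::
  "nat \<Rightarrow> 'e set \<Rightarrow> ('e \<Rightarrow> nat) \<Rightarrow> ('e \<Rightarrow> nat) \<Rightarrow> ('e \<Rightarrow> 'd \<Rightarrow> int)
   \<Rightarrow> ('e \<Rightarrow> real) \<Rightarrow> (nat \<Rightarrow> real) \<Rightarrow> nat \<Rightarrow> ('d \<Rightarrow> int) \<Rightarrow> complex" where
  "Tcoef nu E src tgt tau alpha V n m =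
     (\<Sum>c\<in>mcycles nu E src tgt tau n m.
        complex_of_real (\<Prod>s<n. momega E src V (c ! s))
        * cis (- (\<Sum>s<n. malpha alpha (c ! s))))"

end

theory Submission
  imports Defs "Jordan_Normal_Form.Schur_Decomposition"
begin



definition QQ :: "complex list \<Rightarrow> complex poly" where
  "QQ es = (\<Prod>a\<leftarrow>es. [:1, -a:])"
definition PS :: "complex list \<Rightarrow> nat \<Rightarrow> complex" where
  "PS es j = (\<Sum>a\<leftarrow>es. a ^ j)"
definition SS :: "complex list \<Rightarrow> nat \<Rightarrow> complex poly" where
  "SS es N = (\<Sum>j\<in>{1..N}. monom (PS es j) j)"

lemma geom_id: "[:0, x::complex:] = [:1, -x:] * (\<Sum>j\<in>{1..N}. monom (x ^ j) j) + monom (x ^ Suc N) (Suc N)"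
proof (induction N)
  case 0
  show ?case by (simp add: poly_eq_iff coeff_pCons split: nat.split)
next
  case (Suc N)
  have "[:1, -x:] * (\<Sum>j\<in>{1..Suc N}. monom (x ^ j) j) + monom (x ^ Suc (Suc N)) (Suc (Suc N))
     = [:1, -x:] * (\<Sum>j\<in>{1..N}. monom (x ^ j) j) + [:1, -x:] * monom (x ^ Suc N) (Suc N) + monom (x ^ Suc (Suc N)) (Suc (Suc N))"
    by (simp add: distrib_left)
  also have "[:1, -x:] * monom (x ^ Suc N) (Suc N) + monom (x ^ Suc (Suc N)) (Suc (Suc N)) = monom (x ^ Suc N) (Suc N)"
    by (simp add: monom_Suc algebra_simps smult_monom add_monom)
  hence "[:1, -x:] * (\<Sum>j\<in>{1..Suc N}. monom (x ^ j) j) + monom (x ^ Suc (Suc N)) (Suc (Suc N))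
     = [:1, -x:] * (\<Sum>j\<in>{1..N}. monom (x ^ j) j) + monom (x ^ Suc N) (Suc N)"
    using calculation by (simp add: add.assoc)
  then show ?case using Suc by simp
qed

lemma newton_id: "\<exists>R. [:0, -1:] * pderiv (QQ es) = QQ es * SS es N + monom 1 (Suc N) * R"
proof (induction es)
  case Nil
  then show ?case by (simp add: QQ_def SS_def PS_def)
next
  case (Cons x es)
  then obtain R where R: "[:0, -1:] * pderiv (QQ es) = QQ es * SS es N + monom 1 (Suc N) * R" by blast
  have Qc: "QQ (x # es) = [:1, -x:] * QQ es" by (simp add: QQ_def)
  have Sc: "SS (x # es) N = SS es N + (\<Sum>j\<in>{1..N}. monom (x ^ j) j)"
    by (simp add: SS_def PS_def sum.distrib flip: add_monom)
  have "[:0, -1:] * pderiv (QQ (x # es)) = [:1, -x:] * ([:0, -1:] * pderiv (QQ es)) + QQ es * [:0, x:]"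
  proof -
    have d: "pderiv [:1, -x:] = [:-x:]" by (simp add: pderiv_pCons)
    have m: "[:0, -1:] * [:-x:] = [:0, x:]" by simp
    show ?thesis unfolding Qc pderiv_mult d
      by (simp only: distrib_left mult.assoc[symmetric] m mult.commute[of "[:0, -1:]" "[:1, -x:]"])
         (simp add: ac_simps)
  qed
  also have "\<dots> = [:1, -x:] * (QQ es * SS es N + monom 1 (Suc N) * R)
      + QQ es * ([:1, -x:] * (\<Sum>j\<in>{1..N}. monom (x ^ j) j) + monom (x ^ Suc N) (Suc N))"
    by (subst geom_id[of x N]) (simp only: R)
  also have "\<dots> = QQ (x # es) * SS (x # es) N + monom 1 (Suc N) * ([:1, -x:] * R + QQ es * [:x ^ Suc N:])"
    by (simp add: Qc Sc algebra_simps monom_altdef)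
  finally show ?case by blast
qed

lemma coeff_SS0: "coeff (SS es N) 0 = 0"
  by (simp add: SS_def coeff_sum)

lemma newton_coeff:
  assumes "Suc k \<le> N"
  shows "- (of_nat (Suc k) * coeff (QQ es) (Suc k)) = (\<Sum>i\<le>k. coeff (QQ es) i * coeff (SS es N) (Suc k - i))"
proof -
  obtain R where R: "[:0, -1:] * pderiv (QQ es) = QQ es * SS es N + monom 1 (Suc N) * R"
    using newton_id by blast
  have "- (of_nat (Suc k) * coeff (QQ es) (Suc k)) = coeff ([:0, -1:] * pderiv (QQ es)) (Suc k)"
    by (simp add: coeff_pderiv)
  also have "\<dots> = coeff (QQ es * SS es N + monom 1 (Suc N) * R) (Suc k)" by (simp only: R)
  also have "\<dots> = coeff (QQ es * SS es N) (Suc k)"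
    using assms by (simp add: coeff_monom_mult)
  also have "\<dots> = (\<Sum>i\<le>Suc k. coeff (QQ es) i * coeff (SS es N) (Suc k - i))"
    by (simp only: coeff_mult)
  also have "\<dots> = (\<Sum>i\<le>k. coeff (QQ es) i * coeff (SS es N) (Suc k - i))"
    by (simp add: coeff_SS0)
  finally show ?thesis .
qed

lemma degree_QQ: "degree (QQ es) \<le> length es"
proof (induction es)
  case Nil then show ?case by (simp add: QQ_def)
next
  case (Cons a es)
  have QQc: "QQ (a # es) = [:1, -a:] * QQ es" by (simp add: QQ_def)
  have "degree (QQ (a # es)) \<le> degree [:1, -a:] + degree (QQ es)"
    unfolding QQc by (rule degree_mult_le)
  also have "\<dots> \<le> 1 + length es" using Cons by simp
  finally show ?case by simp
qed

lemma coeff_QQ0: "coeff (QQ es) 0 = 1"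
  by (induction es) (simp_all add: QQ_def)

lemma newton_unique:
  assumes "length es = N" "length fs = N" "\<forall>j\<in>{1..N}. PS es j = PS fs j"
  shows "QQ es = QQ fs"
proof -
  have S: "SS es N = SS fs N" using assms(3) by (simp add: SS_def)
  have "\<forall>k'\<le>k. k' \<le> N \<longrightarrow> coeff (QQ es) k' = coeff (QQ fs) k'" for k
  proof (induction k)
    case 0 then show ?case by (simp add: coeff_QQ0)
  next
    case (Suc k)
    have "coeff (QQ es) (Suc k) = coeff (QQ fs) (Suc k)" if "Suc k \<le> N"
    proof -
      have "- (of_nat (Suc k) * coeff (QQ es) (Suc k)) = - (of_nat (Suc k) * coeff (QQ fs) (Suc k))"
        unfolding newton_coeff[OF that, of es] newton_coeff[OF that, of fs] S
        using Suc that by (intro sum.cong) auto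
      then show ?thesis by (simp del: of_nat_Suc)
    qed
    then show ?case using Suc by (auto simp: le_Suc_eq)
  qed
  hence "\<forall>k\<le>N. coeff (QQ es) k = coeff (QQ fs) k" by blast
  moreover have "coeff (QQ es) k = 0" "coeff (QQ fs) k = 0" if "k > N" for k
    using degree_QQ[of es] degree_QQ[of fs] assms that by (auto intro: coeff_eq_0)
  ultimately show ?thesis
    by (metis leI poly_eqI)
qed

definition PP :: "complex list \<Rightarrow> complex poly" where
  "PP es = (\<Prod>a\<leftarrow>es. [:-a, 1:])"

lemma lin_aux: "[:1:] + monom (-a) (Suc 0) = [:1, -a::complex:]"
  by (simp add: poly_eq_iff coeff_monom coeff_pCons split: nat.split)

lemma reflect_PP: "reflect_poly (PP es) = QQ es"
  by (simp add: PP_def QQ_def reflect_poly_prod_list o_def reflect_poly_pCons' lin_aux)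

lemma degree_PP: "degree (PP es) = length es \<and> coeff (PP es) (length es) = 1"
proof (induction es)
  case Nil then show ?case by (simp add: PP_def)
next
  case (Cons a es)
  have nz: "PP es \<noteq> 0" using Cons by auto
  have PPc: "PP (a # es) = [:-a, 1:] * PP es" by (simp add: PP_def)
  have "degree (PP (a # es)) = Suc (length es)"
    unfolding PPc using nz Cons by (subst degree_mult_eq) auto
  moreover have "lead_coeff (PP (a # es)) = 1"
    unfolding PPc lead_coeff_mult using Cons by simp
  ultimately show ?case by simp
qed

lemma newton_PP:
  assumes "length es = N" "length fs = N" "\<forall>j\<in>{1..N}. PS es j = PS fs j"
  shows "PP es = PP fs"
proof (rule poly_eqI)
  fix i
  have Q: "QQ es = QQ fs" by (rule newton_unique[OF assms])
  show "coeff (PP es) i = coeff (PP fs) i"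
  proof (cases "i \<le> N")
    case True
    have "coeff (PP es) i = coeff (reflect_poly (PP es)) (N - i)"
      using degree_PP[of es] assms True by (simp add: coeff_reflect_poly)
    moreover have "coeff (PP fs) i = coeff (reflect_poly (PP fs)) (N - i)"
      using degree_PP[of fs] assms True by (simp add: coeff_reflect_poly)
    ultimately show ?thesis using Q by (simp add: reflect_PP)
  next
    case False
    then show ?thesis using degree_PP[of es] degree_PP[of fs] assms
      by (simp add: coeff_eq_0)
  qed
qed



definition mtr :: "complex mat \<Rightarrow> complex" where
  "mtr A = (\<Sum>i<dim_row A. A $$ (i, i))"

lemma ut_pow:
  fixes B :: "complex mat"
  assumes B: "B \<in> carrier_mat n n" and ut: "upper_triangular B"
  shows "upper_triangular (B ^\<^sub>m k) \<and> (\<forall>i<n. (B ^\<^sub>m k) $$ (i, i) = (B $$ (i, i)) ^ k)"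
proof (induction k)
  case 0 then show ?case using B by simp
next
  case (Suc k)
  define C where "C = B ^\<^sub>m k"
  have C: "C \<in> carrier_mat n n" using B by (simp add: C_def)
  have utC: "upper_triangular C" and dC: "\<forall>i<n. C $$ (i, i) = (B $$ (i, i)) ^ k" using Suc by (auto simp: C_def)
  have Cz: "C $$ (i, l) = 0" if "l < i" "i < n" for i l using utC that C by auto
  have Bz: "B $$ (l, j) = 0" if "j < l" "l < n" for l j using ut that B by auto
  have e: "(C * B) $$ (i, j) = (\<Sum>l = 0..<n. C $$ (i, l) * B $$ (l, j))" if "i < n" "j < n" for i j
    using that C B by (simp add: scalar_prod_def)
  have "upper_triangular (C * B)"
  proof (rule upper_triangularI)
    fix i j assume ji: "j < i" and i: "i < dim_row (C * B)"
    then have i': "i < n" using C by simp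
    have "(C * B) $$ (i, j) = (\<Sum>l = 0..<n. C $$ (i, l) * B $$ (l, j))" using e i' ji by simp
    also have "\<dots> = 0"
    proof (rule sum.neutral, intro ballI)
      fix l assume l: "l \<in> {0..<n}"
      show "C $$ (i, l) * B $$ (l, j) = 0"
      proof (cases "l < i")
        case True then show ?thesis using Cz i' by simp
      next
        case False then show ?thesis using Bz ji l by simp
      qed
    qed
    finally show "(C * B) $$ (i, j) = 0" .
  qed
  moreover have "(C * B) $$ (i, i) = (B $$ (i, i)) ^ Suc k" if i: "i < n" for i
  proof -
    have "(C * B) $$ (i, i) = (\<Sum>l = 0..<n. C $$ (i, l) * B $$ (l, i))" using e i by simp
    also have "\<dots> = C $$ (i, i) * B $$ (i, i)"
    proof -
      have "(\<Sum>l = 0..<n. C $$ (i, l) * B $$ (l, i)) = (\<Sum>l\<in>{i}. C $$ (i, l) * B $$ (l, i))"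
      proof (rule sum.mono_neutral_right)
        show "\<forall>l\<in>{0..<n} - {i}. C $$ (i, l) * B $$ (l, i) = 0"
        proof
          fix l assume "l \<in> {0..<n} - {i}"
          then show "C $$ (i, l) * B $$ (l, i) = 0"
            using Cz Bz i by (cases "l < i") auto
        qed
      qed (use i in auto)
      then show ?thesis by simp
    qed
    finally show ?thesis using dC i by (simp add: mult.commute)
  qed
  ultimately show ?case by (simp add: C_def)
qed

lemma mtr_comm:
  assumes "X \<in> carrier_mat n n" "Y \<in> carrier_mat n n"
  shows "mtr (X * Y) = mtr (Y * X)"
proof -
  have "mtr (X * Y) = (\<Sum>i<n. \<Sum>l = 0..<n. X $$ (i, l) * Y $$ (l, i))"
    using assms by (simp add: mtr_def scalar_prod_def)
  also have "\<dots> = (\<Sum>l = 0..<n. \<Sum>i<n. Y $$ (l, i) * X $$ (i, l))"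
    by (subst sum.swap) (simp add: mult.commute)
  also have "\<dots> = mtr (Y * X)"
    using assms by (simp add: mtr_def scalar_prod_def lessThan_atLeast0)
  finally show ?thesis .
qed


lemma trace_pow_PP:
  assumes A: "A \<in> carrier_mat n n" and cp: "char_poly A = PP es"
  shows "mtr (A ^\<^sub>m k) = PS es k"
proof -
  obtain B P Q where sd: "schur_decomposition A es = (B, P, Q)" by (cases "schur_decomposition A es") auto
  from schur_decomposition[OF A cp[unfolded PP_def] sd]
  have sim: "similar_mat_wit A B P Q" and ut: "upper_triangular B" and dg: "diag_mat B = es" by auto
  have car: "B \<in> carrier_mat n n" "P \<in> carrier_mat n n" "Q \<in> carrier_mat n n" "Q * P = 1\<^sub>m n"
    using sim A unfolding similar_mat_wit_def Let_def by auto
  have Bk: "B ^\<^sub>m k \<in> carrier_mat n n" using car by simp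
  have "mtr (A ^\<^sub>m k) = mtr (P * B ^\<^sub>m k * Q)" using similar_mat_wit_pow_id[OF sim] by simp
  also have "\<dots> = mtr (Q * (P * B ^\<^sub>m k))"
    by (rule mtr_comm) (use car Bk in auto)
  also have "Q * (P * B ^\<^sub>m k) = B ^\<^sub>m k"
    using assoc_mult_mat[OF car(3) car(2) Bk] car Bk by simp
  also have "mtr (B ^\<^sub>m k) = (\<Sum>i<n. (B $$ (i, i)) ^ k)"
    using ut_pow[OF car(1) ut, of k] car by (simp add: mtr_def)
  also have "\<dots> = PS es k"
  proof -
    have "es = map (\<lambda>i. B $$ (i, i)) [0..<n]" using dg car by (simp add: diag_mat_def)
    then show ?thesis by (simp add: PS_def o_def interv_sum_list_conv_sum_set_nat lessThan_atLeast0)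
  qed
  finally show ?thesis .
qed

lemma hermitian_real_root:
  assumes A: "A \<in> carrier_mat n n" and herm: "\<forall>i<n. \<forall>j<n. A $$ (j, i) = cnj (A $$ (i, j))"
    and root: "poly (char_poly A) a = 0"
  shows "cnj a = a"
proof -
  have "eigenvalue A a" using eigenvalue_root_char_poly[OF A] root by simp
  then obtain v where ev: "eigenvector A v a" unfolding eigenvalue_def by blast
  then have v: "v \<in> carrier_vec n" and vnz: "v \<noteq> 0\<^sub>v n" and Av: "A *\<^sub>v v = a \<cdot>\<^sub>v v"
    using A unfolding eigenvector_def by auto
  have Avi: "(A *\<^sub>v v) $ i = (\<Sum>j<n. A $$ (i, j) * v $ j)" if "i < n" for i
    using that A v by (simp add: scalar_prod_def lessThan_atLeast0)
  define s where "s = (\<Sum>i<n. cnj (v $ i) * (A *\<^sub>v v) $ i)"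
  define N where "N = (\<Sum>i<n. cnj (v $ i) * v $ i)"
  have sN: "s = a * N" unfolding s_def N_def using Av v
    by (simp add: sum_distrib_left mult.assoc mult.left_commute)
  have "cnj s = (\<Sum>i<n. \<Sum>j<n. v $ i * cnj (A $$ (i, j)) * cnj (v $ j))"
    unfolding s_def by (simp add: Avi cnj_sum sum_distrib_left mult.assoc)
  also have "\<dots> = (\<Sum>i<n. \<Sum>j<n. v $ i * A $$ (j, i) * cnj (v $ j))"
  proof (intro sum.cong refl)
    fix i j assume "i \<in> {..<n}" "j \<in> {..<n}"
    then have h: "A $$ (j, i) = cnj (A $$ (i, j))" using herm by blast
    show "v $ i * cnj (A $$ (i, j)) * cnj (v $ j) = v $ i * A $$ (j, i) * cnj (v $ j)"
      by (simp only: h)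
  qed
  also have "\<dots> = (\<Sum>j<n. \<Sum>i<n. cnj (v $ j) * (A $$ (j, i) * v $ i))"
    by (subst sum.swap) (simp add: ac_simps)
  also have "\<dots> = s" unfolding s_def by (simp add: Avi sum_distrib_left)
  finally have cs: "cnj s = s" .
  have Nr: "N = of_real (\<Sum>i<n. (cmod (v $ i))^2)"
    unfolding N_def of_real_sum by (intro sum.cong refl) (subst complex_norm_square, simp add: mult.commute)
  obtain i where i: "i < n" "v $ i \<noteq> 0" using vnz v by (metis eq_vecI index_zero_vec(1) index_zero_vec(2) carrier_vecD)
  have "(\<Sum>i<n. (cmod (v $ i))^2) > 0"
  proof (rule sum_pos2[of _ i])
    show "finite {..<n}" by simp
    show "i \<in> {..<n}" using i by simp
    show "0 < (cmod (v $ i))^2" using i by simp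
    show "\<And>j. j \<in> {..<n} \<Longrightarrow> 0 \<le> (cmod (v $ j))^2" by simp
  qed
  then have Nnz: "N \<noteq> 0" unfolding Nr by (simp only: of_real_eq_0_iff)
  have cN: "cnj N = N" unfolding Nr by (simp only: complex_cnj_complex_of_real)
  have "a = s / N" using sN Nnz by simp
  then show ?thesis using cs cN by simp
qed



fun wk :: "('a \<Rightarrow> nat) \<Rightarrow> ('a \<Rightarrow> nat) \<Rightarrow> 'a set \<Rightarrow> nat \<Rightarrow> nat \<Rightarrow> 'a list \<Rightarrow> bool" where
  "wk s t M x y [] = (x = y)"
| "wk s t M x y (e # c) = (e \<in> M \<and> s e = x \<and> wk s t M (t e) y c)"

definition wmat :: "nat \<Rightarrow> ('a \<Rightarrow> nat) \<Rightarrow> ('a \<Rightarrow> nat) \<Rightarrow> 'a set \<Rightarrow> ('a \<Rightarrow> complex) \<Rightarrow> complex mat" where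
  "wmat n s t M w = mat n n (\<lambda>(x, y). \<Sum>e\<in>{e\<in>M. s e = x \<and> t e = y}. w e)"

lemma pow_mat_Suc_left:
  assumes "A \<in> carrier_mat n n"
  shows "A ^\<^sub>m Suc k = A * A ^\<^sub>m k"
proof (induction k)
  case 0 then show ?case using assms by simp
next
  case (Suc k)
  have "A ^\<^sub>m Suc (Suc k) = (A * A ^\<^sub>m k) * A" using Suc by simp
  also have "\<dots> = A * (A ^\<^sub>m k * A)"
    using assms by (intro assoc_mult_mat) auto
  finally show ?case by simp
qed

lemma wk_finite: "finite M \<Longrightarrow> finite {c. length c = k \<and> wk s t M x y c}"
proof -
  assume "finite M"
  have "wk s t M x y c \<Longrightarrow> set c \<subseteq> M" for c
    by (induction c arbitrary: x) auto
  hence "{c. length c = k \<and> wk s t M x y c} \<subseteq> {c. set c \<subseteq> M \<and> length c = k}" by auto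
  then show ?thesis using finite_lists_length_eq[OF \<open>finite M\<close>] finite_subset by blast
qed

lemma wmat_pow:
  assumes M: "finite M" and st: "\<forall>e\<in>M. s e < n \<and> t e < n"
  shows "x < n \<Longrightarrow> y < n \<Longrightarrow> (wmat n s t M w ^\<^sub>m k) $$ (x, y)
      = (\<Sum>c\<in>{c. length c = k \<and> wk s t M x y c}. prod_list (map w c))"
proof (induction k arbitrary: x)
  case 0
  have "{c. length c = 0 \<and> wk s t M x y c} = (if x = y then {[]} else {})" by auto
  then show ?case using 0 by (simp add: wmat_def)
next
  case (Suc k)
  let ?A = "wmat n s t M w"
  let ?C = "\<lambda>z k. {c. length c = k \<and> wk s t M z y c}"
  have A: "?A \<in> carrier_mat n n" by (simp add: wmat_def)
  have "(?A ^\<^sub>m Suc k) $$ (x, y) = (?A * ?A ^\<^sub>m k) $$ (x, y)"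
    by (simp only: pow_mat_Suc_left[OF A])
  also have "\<dots> = (\<Sum>z = 0..<n. ?A $$ (x, z) * (?A ^\<^sub>m k) $$ (z, y))"
    using A Suc.prems by (simp add: scalar_prod_def)
  also have "\<dots> = (\<Sum>z = 0..<n. \<Sum>e\<in>{e\<in>{e\<in>M. s e = x}. t e = z}. w e * (\<Sum>c\<in>?C (t e) k. prod_list (map w c)))"
  proof (rule sum.cong[OF refl])
    fix z assume z: "z \<in> {0..<n}"
    have "?A $$ (x, z) * (?A ^\<^sub>m k) $$ (z, y) = (\<Sum>e\<in>{e\<in>M. s e = x \<and> t e = z}. w e) * (\<Sum>c\<in>?C z k. prod_list (map w c))"
      using z Suc by (simp add: wmat_def)
    also have "\<dots> = (\<Sum>e\<in>{e\<in>{e\<in>M. s e = x}. t e = z}. w e * (\<Sum>c\<in>?C (t e) k. prod_list (map w c)))"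
      by (simp add: sum_distrib_right conj_commute) (intro sum.cong; auto)
    finally show "?A $$ (x, z) * (?A ^\<^sub>m k) $$ (z, y) = \<dots>" .
  qed
  also have "\<dots> = (\<Sum>e\<in>{e\<in>M. s e = x}. w e * (\<Sum>c\<in>?C (t e) k. prod_list (map w c)))"
    by (rule sum.group) (use M st in auto)
  also have "\<dots> = (\<Sum>e\<in>{e\<in>M. s e = x}. \<Sum>c\<in>?C (t e) k. w e * prod_list (map w c))"
    by (simp add: sum_distrib_left)
  also have "\<dots> = (\<Sum>(e, c)\<in>Sigma {e\<in>M. s e = x} (\<lambda>e. ?C (t e) k). w e * prod_list (map w c))"
    by (rule sum.Sigma) (use M wk_finite[OF M] in auto)
  also have "\<dots> = (\<Sum>c\<in>?C x (Suc k). prod_list (map w c))"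
    by (rule sum.reindex_bij_witness[where i = "\<lambda>c. (hd c, tl c)" and j = "\<lambda>(e, c). e # c"])
       (auto simp: length_Suc_conv)
  finally show ?case .
qed

lemma wk_iff: "wk s t M x y c \<longleftrightarrow> set c \<subseteq> M \<and> (c = [] \<longrightarrow> x = y) \<and>
   (c \<noteq> [] \<longrightarrow> s (c ! 0) = x \<and> t (last c) = y \<and> (\<forall>i. Suc i < length c \<longrightarrow> t (c ! i) = s (c ! Suc i)))"
proof (induction c arbitrary: x)
  case Nil then show ?case by simp
next
  case (Cons e c)
  note IH = Cons.IH
  show ?case
  proof (cases c)
    case Nil then show ?thesis by auto
  next
    case (Cons e' c')
    hence ne: "c \<noteq> []" by simp
    have eq: "(\<forall>i. Suc i < length (e # c) \<longrightarrow> t ((e # c) ! i) = s ((e # c) ! Suc i)) \<longleftrightarrow>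
          t e = s (c ! 0) \<and> (\<forall>i. Suc i < length c \<longrightarrow> t (c ! i) = s (c ! Suc i))"
    proof
      assume H: "\<forall>i. Suc i < length (e # c) \<longrightarrow> t ((e # c) ! i) = s ((e # c) ! Suc i)"
      have "t e = s (c ! 0)" using H[rule_format, of 0] ne by simp
      moreover have "\<forall>i. Suc i < length c \<longrightarrow> t (c ! i) = s (c ! Suc i)"
      proof (intro allI impI)
        fix i assume "Suc i < length c"
        then show "t (c ! i) = s (c ! Suc i)" using H[rule_format, of "Suc i"] by simp
      qed
      ultimately show "t e = s (c ! 0) \<and> (\<forall>i. Suc i < length c \<longrightarrow> t (c ! i) = s (c ! Suc i))" by blast
    next
      assume H: "t e = s (c ! 0) \<and> (\<forall>i. Suc i < length c \<longrightarrow> t (c ! i) = s (c ! Suc i))"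
      show "\<forall>i. Suc i < length (e # c) \<longrightarrow> t ((e # c) ! i) = s ((e # c) ! Suc i)"
      proof (intro allI impI)
        fix i assume i: "Suc i < length (e # c)"
        show "t ((e # c) ! i) = s ((e # c) ! Suc i)"
        proof (cases i)
          case 0 then show ?thesis using H by simp
        next
          case (Suc j) then show ?thesis using H i by simp
        qed
      qed
    qed
    have A: "wk s t M x y (e # c) \<longleftrightarrow> e \<in> M \<and> s e = x \<and> set c \<subseteq> M \<and> s (c ! 0) = t e \<and> t (last c) = y
       \<and> (\<forall>i. Suc i < length c \<longrightarrow> t (c ! i) = s (c ! Suc i))"
      using IH[of "t e"] ne by simp
    have B: "last (e # c) = last c" "(e # c) ! 0 = e" "set (e # c) \<subseteq> M \<longleftrightarrow> e \<in> M \<and> set c \<subseteq> M"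
      using ne by auto
    show ?thesis unfolding A B eq using ne by auto
  qed
qed

definition cyc :: "('a \<Rightarrow> nat) \<Rightarrow> ('a \<Rightarrow> nat) \<Rightarrow> 'a set \<Rightarrow> nat \<Rightarrow> 'a list set" where
  "cyc s t M k = {c. length c = k \<and> set c \<subseteq> M \<and> (\<forall>i<k. t (c ! i) = s (c ! ((i + 1) mod k)))}"

lemma wk_cyc:
  assumes "k \<ge> 1" "length c = k"
  shows "wk s t M x x c \<longleftrightarrow> c \<in> cyc s t M k \<and> s (c ! 0) = x"
proof -
  have ne: "c \<noteq> []" using assms by auto
  have l: "last c = c ! (k - 1)" using assms ne by (simp add: last_conv_nth)
  have "(\<forall>i<k. t (c ! i) = s (c ! ((i + 1) mod k))) \<longleftrightarrow>
        t (c ! (k - 1)) = s (c ! 0) \<and> (\<forall>i. Suc i < k \<longrightarrow> t (c ! i) = s (c ! Suc i))"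
  proof
    assume H: "\<forall>i<k. t (c ! i) = s (c ! ((i + 1) mod k))"
    have "t (c ! (k - 1)) = s (c ! 0)" using H[rule_format, of "k - 1"] assms by simp
    moreover have "t (c ! i) = s (c ! Suc i)" if "Suc i < k" for i
      using H[rule_format, of i] that by simp
    ultimately show "t (c ! (k - 1)) = s (c ! 0) \<and> (\<forall>i. Suc i < k \<longrightarrow> t (c ! i) = s (c ! Suc i))" by blast
  next
    assume H: "t (c ! (k - 1)) = s (c ! 0) \<and> (\<forall>i. Suc i < k \<longrightarrow> t (c ! i) = s (c ! Suc i))"
    show "\<forall>i<k. t (c ! i) = s (c ! ((i + 1) mod k))"
    proof (intro allI impI)
      fix i assume i: "i < k"
      show "t (c ! i) = s (c ! ((i + 1) mod k))"
      proof (cases "Suc i < k")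
        case True then show ?thesis using H by simp
      next
        case False then have "Suc i = k" using i by auto
        then have "i = k - 1" "(i + 1) mod k = 0" by auto
        then show ?thesis using H by simp
      qed
    qed
  qed
  then show ?thesis unfolding wk_iff cyc_def using ne l assms by auto
qed


lemma finite_cyc: "finite M \<Longrightarrow> finite (cyc s t M k)"
  by (rule finite_subset[OF _ finite_lists_length_eq[of M k]]) (auto simp: cyc_def)

lemma trace_wmat_pow:
  assumes M: "finite M" and st: "\<forall>e\<in>M. s e < n \<and> t e < n" and k: "k \<ge> 1"
  shows "mtr (wmat n s t M w ^\<^sub>m k) = (\<Sum>c\<in>cyc s t M k. prod_list (map w c))"
proof -
  have "mtr (wmat n s t M w ^\<^sub>m k) = (\<Sum>x<n. (wmat n s t M w ^\<^sub>m k) $$ (x, x))"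
    by (simp add: mtr_def wmat_def)
  also have "\<dots> = (\<Sum>x<n. \<Sum>c\<in>{c\<in>cyc s t M k. s (c ! 0) = x}. prod_list (map w c))"
  proof (rule sum.cong[OF refl])
    fix x assume x: "x \<in> {..<n}"
    have "{c. length c = k \<and> wk s t M x x c} = {c\<in>cyc s t M k. s (c ! 0) = x}"
    proof (rule Set.set_eqI)
      fix c
      show "c \<in> {c. length c = k \<and> wk s t M x x c} \<longleftrightarrow> c \<in> {c\<in>cyc s t M k. s (c ! 0) = x}"
        using wk_cyc[OF k, of c s t M x] by (cases "length c = k") (auto simp: cyc_def)
    qed
    then show "(wmat n s t M w ^\<^sub>m k) $$ (x, x) = (\<Sum>c\<in>{c\<in>cyc s t M k. s (c ! 0) = x}. prod_list (map w c))"
      using wmat_pow[OF M st] x by simp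
  qed
  also have "\<dots> = (\<Sum>c\<in>cyc s t M k. prod_list (map w c))"
  proof (rule sum.group[OF finite_cyc[OF M]])
    show "finite {..<n}" by simp
    show "(\<lambda>c. s (c ! 0)) ` cyc s t M k \<subseteq> {..<n}"
    proof
      fix z assume "z \<in> (\<lambda>c. s (c ! 0)) ` cyc s t M k"
      then obtain c where c: "c \<in> cyc s t M k" "z = s (c ! 0)" by blast
      then have len: "length c = k" and sub: "set c \<subseteq> M" by (auto simp: cyc_def)
      have "c ! 0 \<in> set c" using k len by (intro nth_mem) simp
      then have "c ! 0 \<in> M" using sub by blast
      then show "z \<in> {..<n}" using st c by auto
    qed
  qed
  finally show ?thesis .
qed




lemma sep_vector:
  fixes MM0 :: "('d::finite \<Rightarrow> int) set"
  assumes fin: "finite MM0"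
  shows "\<exists>w. inj_on (\<lambda>m. \<Sum>i\<in>UNIV. m i * w i) MM0"
proof -
  obtain idx :: "'d \<Rightarrow> nat" and n where "idx ` UNIV = {i. i < n} \<and> inj_on idx UNIV"
    using finite_imp_inj_to_nat_seg[OF finite_UNIV] by blast
  then have inj: "inj idx" by blast
  define Q :: "('d \<Rightarrow> int) \<Rightarrow> ('d \<Rightarrow> int) \<Rightarrow> real poly" where
    "Q m m' = (\<Sum>i\<in>UNIV. monom (of_int (m i - m' i)) (idx i))" for m m'
  have cQ: "coeff (Q m m') (idx i0) = of_int (m i0 - m' i0)" for m m' i0
  proof -
    have "coeff (Q m m') (idx i0) = (\<Sum>i\<in>UNIV. if i = i0 then of_int (m i - m' i) else 0)"
      unfolding Q_def coeff_sum coeff_monom using inj by (intro sum.cong refl) (auto dest: injD)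
    then show ?thesis by simp
  qed
  have Qnz: "Q m m' \<noteq> 0" if "m \<noteq> m'" for m m'
  proof -
    obtain i0 where "m i0 \<noteq> m' i0" using \<open>m \<noteq> m'\<close> by blast
    then have "coeff (Q m m') (idx i0) \<noteq> 0" using cQ by simp
    then show ?thesis by auto
  qed
  define Bad where "Bad = (\<Union>p\<in>{p\<in>MM0 \<times> MM0. fst p \<noteq> snd p}. {x. poly (Q (fst p) (snd p)) x = 0})"
  have "finite Bad" unfolding Bad_def
    using fin Qnz by (intro finite_UN_I) (auto intro: poly_roots_finite)
  then have "finite (of_int -` Bad :: int set)"
    by (rule finite_vimageI) (simp add: inj_on_def)
  then obtain t :: int where t: "t \<notin> of_int -` Bad"
    using ex_new_if_finite[OF infinite_UNIV_int] by blast
  define w where "w i = t ^ idx i" for i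
  have "inj_on (\<lambda>m. \<Sum>i\<in>UNIV. m i * w i) MM0"
  proof (rule inj_onI, rule ccontr)
    fix m m' assume mm: "m \<in> MM0" "m' \<in> MM0" and eq: "(\<Sum>i\<in>UNIV. m i * w i) = (\<Sum>i\<in>UNIV. m' i * w i)"
      and ne: "m \<noteq> m'"
    have "poly (Q m m') (of_int t) = (\<Sum>i\<in>UNIV. of_int (m i - m' i) * (of_int t) ^ idx i)"
      unfolding Q_def poly_sum poly_monom by simp
    also have "\<dots> = of_int ((\<Sum>i\<in>UNIV. m i * w i) - (\<Sum>i\<in>UNIV. m' i * w i))"
      by (simp add: w_def sum_subtractf[symmetric] algebra_simps)
    also have "\<dots> = 0" using eq by simp
    finally have "of_int t \<in> Bad" unfolding Bad_def using mm ne by auto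
    then show False using t by simp
  qed
  then show ?thesis by blast
qed

lemma cis_root_infinite: "infinite (cis ` {0..pi})"
proof
  assume "finite (cis ` {0..pi})"
  moreover have "inj_on cis {0..pi}"
  proof (rule inj_onI)
    fix x y assume "x \<in> {0..pi}" "y \<in> {0..pi}" "cis x = cis y"
    then show "x = y" using cos_inj_pi[of x y] by (metis atLeastAtMost_iff cis.simps(1))
  qed
  ultimately have "finite {0..pi}" using finite_imageD by blast
  then show False using infinite_Icc[OF pi_gt_zero] by blast
qed

lemma fourier_1d:
  fixes a :: "'m \<Rightarrow> complex" and N :: "'m \<Rightarrow> int"
  assumes fin: "finite MM" and inj: "inj_on N MM"
    and const: "\<forall>s::real. (\<Sum>m\<in>MM. a m * cis (s * of_int (N m))) = C"
  shows "\<forall>m\<in>MM. N m \<noteq> 0 \<longrightarrow> a m = 0"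
proof -
  define L where "L = (\<Sum>m\<in>MM. \<bar>N m\<bar>)"
  have L: "N m + L \<ge> 0" "L \<ge> 0" if "m \<in> MM" for m
  proof -
    have "\<bar>N m\<bar> \<le> L" unfolding L_def using fin that by (intro member_le_sum) auto
    then show "N m + L \<ge> 0" "L \<ge> 0" by auto
  qed
  have L0: "L \<ge> 0" unfolding L_def by (simp add: sum_nonneg)
  define P where "P = (\<Sum>m\<in>MM. monom (a m) (nat (N m + L))) - monom C (nat L)"
  have root: "poly P (cis s) = 0" for s
  proof -
    have pw: "cis s ^ nat (N m + L) = cis (s * of_int (N m)) * cis (s * of_int L)" if "m \<in> MM" for m
    proof -
      have "cis s ^ nat (N m + L) = cis (real (nat (N m + L)) * s)" by (rule DeMoivre)
      also have "real (nat (N m + L)) = of_int (N m) + of_int L" using L[OF that] by simp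
      finally show ?thesis by (simp add: cis_mult algebra_simps)
    qed
    have pw0: "cis s ^ nat L = cis (s * of_int L)"
      using L0 by (simp add: DeMoivre mult.commute)
    have "poly P (cis s) = (\<Sum>m\<in>MM. a m * cis s ^ nat (N m + L)) - C * cis s ^ nat L"
      unfolding P_def by (simp add: poly_sum poly_monom)
    also have "(\<Sum>m\<in>MM. a m * cis s ^ nat (N m + L)) = (\<Sum>m\<in>MM. a m * cis (s * of_int (N m)) * cis (s * of_int L))"
      by (intro sum.cong refl) (simp add: pw mult.assoc)
    also have "\<dots> - C * cis s ^ nat L = ((\<Sum>m\<in>MM. a m * cis (s * of_int (N m))) - C) * cis (s * of_int L)"
      by (simp add: pw0 sum_distrib_right left_diff_distrib)
    also have "\<dots> = 0" using const by simp
    finally show ?thesis .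
  qed
  have "P = 0"
  proof (rule ccontr)
    assume "P \<noteq> 0"
    then have "finite {x. poly P x = 0}" by (rule poly_roots_finite)
    moreover have "cis ` {0..pi} \<subseteq> {x. poly P x = 0}" using root by auto
    ultimately show False using cis_root_infinite finite_subset by blast
  qed
  show ?thesis
  proof (intro ballI impI)
    fix m0 assume m0: "m0 \<in> MM" and nz: "N m0 \<noteq> 0"
    have "coeff P (nat (N m0 + L)) = (\<Sum>m\<in>MM. if m = m0 then a m else 0) - (if nat L = nat (N m0 + L) then C else 0)"
      unfolding P_def coeff_diff coeff_sum coeff_monom
    proof (intro arg_cong2[where f = minus] sum.cong refl)
      fix m assume m: "m \<in> MM"
      have "nat (N m + L) = nat (N m0 + L) \<longleftrightarrow> N m = N m0" using L[OF m] L[OF m0] by auto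
      also have "\<dots> \<longleftrightarrow> m = m0" using inj m m0 by (auto dest: inj_onD)
      finally show "(if nat (N m + L) = nat (N m0 + L) then a m else 0) = (if m = m0 then a m else 0)" by simp
    qed
    also have "\<dots> = a m0" using m0 fin nz L0 L[OF m0] by simp
    finally show "a m0 = 0" using \<open>P = 0\<close> by simp
  qed
qed

lemma fourier:
  fixes MM :: "('d::finite \<Rightarrow> int) set" and a :: "('d \<Rightarrow> int) \<Rightarrow> complex"
  assumes fin: "finite MM"
    and const: "\<forall>k. (\<Sum>m\<in>MM. a m * cis (inner_ik m k)) = (\<Sum>m\<in>MM. a m * cis (inner_ik m (\<lambda>_. 0)))"
  shows "\<forall>m\<in>MM. m \<noteq> (\<lambda>_. 0) \<longrightarrow> a m = 0"
proof -
  obtain w where inj: "inj_on (\<lambda>m. \<Sum>i\<in>UNIV. m i * w i) (insert (\<lambda>_. 0) MM)"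
    using sep_vector[of "insert (\<lambda>_. 0) MM"] fin by auto
  define N where "N m = (\<Sum>i\<in>UNIV. m i * w i)" for m :: "'d \<Rightarrow> int"
  have inner: "inner_ik m (\<lambda>i. s * of_int (w i)) = s * of_int (N m)" for m s
    unfolding inner_ik_def N_def by (simp add: sum_distrib_left algebra_simps)
  have "\<forall>s::real. (\<Sum>m\<in>MM. a m * cis (s * of_int (N m))) = (\<Sum>m\<in>MM. a m * cis (inner_ik m (\<lambda>_. 0)))"
  proof
    fix s :: real
    have "(\<Sum>m\<in>MM. a m * cis (s * of_int (N m))) = (\<Sum>m\<in>MM. a m * cis (inner_ik m (\<lambda>i. s * of_int (w i))))"
      by (simp add: inner)
    also have "\<dots> = (\<Sum>m\<in>MM. a m * cis (inner_ik m (\<lambda>_. 0)))" using const by blast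
    finally show "(\<Sum>m\<in>MM. a m * cis (s * of_int (N m))) = (\<Sum>m\<in>MM. a m * cis (inner_ik m (\<lambda>_. 0)))" .
  qed
  from fourier_1d[OF fin _ this] inj
  have res: "\<forall>m\<in>MM. N m \<noteq> 0 \<longrightarrow> a m = 0" unfolding N_def by (auto intro: inj_on_subset)
  show ?thesis
  proof (intro ballI impI)
    fix m assume m: "m \<in> MM" "m \<noteq> (\<lambda>_. 0)"
    have "N (\<lambda>_. 0) = 0" by (simp add: N_def)
    moreover have "N m \<noteq> N (\<lambda>_. 0)"
      using inj_onD[OF inj, of m "\<lambda>_. 0"] m unfolding N_def by auto
    ultimately have "N m \<noteq> 0" by simp
    then show "a m = 0" using res m by blast
  qed
qed




definition wf :: "'e set \<Rightarrow> ('e \<Rightarrow> nat) \<Rightarrow> ('e \<Rightarrow> 'd::finite \<Rightarrow> int) \<Rightarrow> ('e \<Rightarrow> real) \<Rightarrow> (nat \<Rightarrow> real)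
   \<Rightarrow> ('d \<Rightarrow> real) \<Rightarrow> 'e + nat \<Rightarrow> complex" where
  "wf E src tau alpha V k e = complex_of_real (momega E src V e) * cis (malpha alpha e + inner_ik (mtau tau e) k)"

lemma inner_ik_zero[simp]: "inner_ik (\<lambda>_. 0) k = 0"
  by (simp add: inner_ik_def)

lemma inner_ik_neg: "inner_ik (\<lambda>i. - m i) k = - inner_ik m k"
  by (simp add: inner_ik_def sum_negf)

lemma inner_ik_sum: "inner_ik (\<lambda>i. \<Sum>s\<in>A. f s i) k = (\<Sum>s\<in>A. inner_ik (f s) k)"
  unfolding inner_ik_def by (simp add: sum_distrib_right) (rule sum.swap)

lemma prod_cis: "(\<Prod>s\<in>A. cis (f s)) = cis (\<Sum>s\<in>A. f s)"
  by (induction A rule: infinite_finite_induct) (simp_all add: cis_mult)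

lemma fiber_wmat:
  assumes fin: "finite E" and st: "\<forall>e\<in>E. src e < nu \<and> tgt e < nu"
  shows "fiber_op nu E src tgt tau alpha V k = wmat nu (msrc src) (msrc tgt) (medges nu E) (wf E src tau alpha V k)"
proof (rule eq_matI)
  fix x y assume x: "x < dim_row (wmat nu (msrc src) (msrc tgt) (medges nu E) (wf E src tau alpha V k))"
    and y: "y < dim_col (wmat nu (msrc src) (msrc tgt) (medges nu E) (wf E src tau alpha V k))"
  then have x': "x < nu" and y': "y < nu" by (auto simp: wmat_def)
  have set: "{e\<in>medges nu E. msrc src e = x \<and> msrc tgt e = y} =
     Inl ` {e\<in>E. src e = x \<and> tgt e = y} \<union> Inr ` {z\<in>{..<nu}. z = x \<and> z = y}"
    unfolding medges_def by auto
  have "(\<Sum>e\<in>{e\<in>medges nu E. msrc src e = x \<and> msrc tgt e = y}. wf E src tau alpha V k e)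
     = (\<Sum>e\<in>Inl ` {e\<in>E. src e = x \<and> tgt e = y}. wf E src tau alpha V k e)
       + (\<Sum>e\<in>Inr ` {z\<in>{..<nu}. z = x \<and> z = y}. wf E src tau alpha V k e)"
    unfolding set using fin by (intro sum.union_disjoint) auto
  also have "(\<Sum>e\<in>Inl ` {e\<in>E. src e = x \<and> tgt e = y}. wf E src tau alpha V k e)
      = (\<Sum>e\<in>{e\<in>E. src e = x \<and> tgt e = y}. cis (alpha e + inner_ik (tau e) k))"
    by (subst sum.reindex) (auto simp: wf_def)
  also have "(\<Sum>e\<in>Inr ` {z\<in>{..<nu}. z = x \<and> z = y}. wf E src tau alpha V k e)
      = (if x = y then complex_of_real (V x - real (kappa E src x)) else 0)"
  proof (cases "x = y")
    case True
    then have "{z\<in>{..<nu}. z = x \<and> z = y} = {x}" using x' by auto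
    then show ?thesis using True by (simp add: wf_def)
  next
    case False
    then have e: "{z\<in>{..<nu}. z = x \<and> z = y} = {}" by auto
    show ?thesis unfolding e using False by simp
  qed
  finally show "fiber_op nu E src tgt tau alpha V k $$ (x, y) = wmat nu (msrc src) (msrc tgt) (medges nu E) (wf E src tau alpha V k) $$ (x, y)"
    using x' y' by (simp add: fiber_op_def wmat_def)
qed (auto simp: fiber_op_def wmat_def)

lemma fiber_hermitian:
  assumes "\<forall>e\<in>E. flip e \<in> E \<and> flip (flip e) = e \<and> flip e \<noteq> e
               \<and> src (flip e) = tgt e \<and> tgt (flip e) = src e
               \<and> tau (flip e) = (\<lambda>i. - tau e i) \<and> alpha (flip e) = - alpha e"
    and "i < nu" "j < nu"
  shows "fiber_op nu E src tgt tau alpha V k $$ (j, i) = cnj (fiber_op nu E src tgt tau alpha V k $$ (i, j))"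
proof -
  have "(\<Sum>e\<in>{e\<in>E. src e = j \<and> tgt e = i}. cis (alpha e + inner_ik (tau e) k))
      = (\<Sum>e\<in>{e\<in>E. src e = i \<and> tgt e = j}. cis (- (alpha e + inner_ik (tau e) k)))"
    by (rule sum.reindex_bij_witness[where i = flip and j = flip]) (use assms(1) in \<open>auto simp: inner_ik_neg add.commute\<close>)
  then show ?thesis using assms(2,3) by (simp add: fiber_op_def cnj_sum cis_cnj)
qed

definition idxc :: "('e \<Rightarrow> 'd \<Rightarrow> int) \<Rightarrow> nat \<Rightarrow> ('e + nat) list \<Rightarrow> 'd \<Rightarrow> int" where
  "idxc tau n c = (\<lambda>i. \<Sum>s<n. mtau tau (c ! s) i)"

definition MMs where
  "MMs nu E src tgt tau n = idxc tau n ` cyc (msrc src) (msrc tgt) (medges nu E) n"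

lemma mcycles_cyc: "mcycles nu E src tgt tau n m = {c\<in>cyc (msrc src) (msrc tgt) (medges nu E) n. idxc tau n c = m}"
  unfolding mcycles_def cyc_def idxc_def by auto

lemma finite_medges: "finite E \<Longrightarrow> finite (medges nu E)"
  by (simp add: medges_def)

lemma medges_st: "\<forall>e\<in>E. src e < nu \<and> tgt e < nu \<Longrightarrow> \<forall>e\<in>medges nu E. msrc src e < nu \<and> msrc tgt e < nu"
  by (auto simp: medges_def)

lemma finite_MMs: "finite E \<Longrightarrow> finite (MMs nu E src tgt tau n)"
  unfolding MMs_def by (intro finite_imageI finite_cyc finite_medges)

lemma Tcoef_out: "m \<notin> MMs nu E src tgt tau n \<Longrightarrow> Tcoef nu E src tgt tau alpha V n m = 0"
proof -
  assume "m \<notin> MMs nu E src tgt tau n"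
  then have "mcycles nu E src tgt tau n m = {}" unfolding mcycles_cyc MMs_def by auto
  then show ?thesis by (simp add: Tcoef_def)
qed

lemma prod_wf:
  assumes "length c = n"
  shows "prod_list (map (wf E src tau alpha V k) c) = cis (inner_ik (idxc tau n c) k) *
     (complex_of_real (\<Prod>s<n. momega E src V (c ! s)) * cis (\<Sum>s<n. malpha alpha (c ! s)))"
proof -
  have "prod_list (map (wf E src tau alpha V k) c) = (\<Prod>s<n. wf E src tau alpha V k (c ! s))"
    using assms by (simp add: prod.list_conv_set_nth lessThan_atLeast0)
  also have "\<dots> = (\<Prod>s<n. complex_of_real (momega E src V (c ! s))) * (\<Prod>s<n. cis (malpha alpha (c ! s) + inner_ik (mtau tau (c ! s)) k))"
    unfolding wf_def by (rule prod.distrib)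
  also have "(\<Prod>s<n. cis (malpha alpha (c ! s) + inner_ik (mtau tau (c ! s)) k))
     = cis (\<Sum>s<n. malpha alpha (c ! s)) * cis (inner_ik (idxc tau n c) k)"
    unfolding prod_cis sum.distrib idxc_def inner_ik_sum by (simp add: cis_mult)
  finally show ?thesis by (simp add: ac_simps)
qed

lemma trace_formula:
  assumes fin: "finite E" and st: "\<forall>e\<in>E. src e < nu \<and> tgt e < nu" and n: "n \<ge> 1"
  shows "mtr (fiber_op nu E src tgt tau alpha V k ^\<^sub>m n)
    = (\<Sum>m\<in>MMs nu E src tgt tau n. cis (inner_ik m k) * cnj (Tcoef nu E src tgt tau alpha V n m))"
proof -
  let ?C = "cyc (msrc src) (msrc tgt) (medges nu E) n"
  define h where "h c = complex_of_real (\<Prod>s<n. momega E src V (c ! s)) * cis (\<Sum>s<n. malpha alpha (c ! s))" for c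
  have "mtr (fiber_op nu E src tgt tau alpha V k ^\<^sub>m n) = (\<Sum>c\<in>?C. prod_list (map (wf E src tau alpha V k) c))"
    unfolding fiber_wmat[OF fin st] by (rule trace_wmat_pow[OF finite_medges[OF fin] medges_st[OF st] n])
  also have "\<dots> = (\<Sum>c\<in>?C. cis (inner_ik (idxc tau n c) k) * h c)"
    by (intro sum.cong refl) (simp add: prod_wf h_def cyc_def)
  also have "\<dots> = (\<Sum>m\<in>MMs nu E src tgt tau n. \<Sum>c\<in>{c\<in>?C. idxc tau n c = m}. cis (inner_ik (idxc tau n c) k) * h c)"
    unfolding MMs_def by (rule sum.group[symmetric]) (auto intro: finite_cyc finite_medges fin)
  also have "\<dots> = (\<Sum>m\<in>MMs nu E src tgt tau n. cis (inner_ik m k) * (\<Sum>c\<in>mcycles nu E src tgt tau n m. h c))"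
    unfolding mcycles_cyc by (intro sum.cong refl) (simp add: sum_distrib_left)
  also have "\<dots> = (\<Sum>m\<in>MMs nu E src tgt tau n. cis (inner_ik m k) * cnj (Tcoef nu E src tgt tau alpha V n m))"
    unfolding Tcoef_def h_def by (simp add: cnj_sum cis_cnj)
  finally show ?thesis .
qed

lemma PP_nz: "PP l \<noteq> 0"
  using degree_PP[of l] by auto

lemma proots_PP: "proots (PP l) = mset l"
proof (induction l)
  case Nil then show ?case by (simp add: PP_def)
next
  case (Cons a l)
  have e: "PP (a # l) = [:-a, 1:] * PP l" by (simp add: PP_def)
  have "proots (PP (a # l)) = proots [:-a, 1:] + proots (PP l)"
    unfolding e using PP_nz[of l] by (intro proots_mult) auto
  also have "proots [:-a, 1:] = {#a#}" using proots_linear_factor[of "-a"] by simp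
  finally show ?case using Cons by simp
qed

lemma PP_mset: "mset l = mset l' \<Longrightarrow> PP l = PP l'"
  unfolding PP_def by (metis mset_map prod_mset_prod_list)

lemma PS_mset: "mset l = mset l' \<Longrightarrow> PS l j = PS l' j"
  unfolding PS_def by (metis mset_map sum_mset_sum_list)

lemma poly_PP_zero: "a \<in> set l \<Longrightarrow> poly (PP l) a = 0"
  by (induction l) (auto simp: PP_def)

lemma real_mset: "\<forall>a\<in>#M. cnj a = a \<Longrightarrow> image_mset (\<lambda>a. complex_of_real (Re a)) M = M"
proof (induction M)
  case empty then show ?case by simp
next
  case (add x M)
  have "cnj x = x" using add by simp
  then have "complex_of_real (Re x) = x" by (simp add: complex_eq_iff)
  then show ?case using add by simp
qed

theorem lemma4p3:
  fixes nu :: nat and E :: "'e set" and src tgt :: "'e \<Rightarrow> nat" and flip :: "'e \<Rightarrow> 'e"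
    and tau :: "'e \<Rightarrow> 'd::finite \<Rightarrow> int" and alpha :: "'e \<Rightarrow> real" and V :: "nat \<Rightarrow> real"
  assumes "nu \<ge> 1" and "finite E"
    and "\<forall>e\<in>E. src e < nu \<and> tgt e < nu"
    and "\<forall>e\<in>E. flip e \<in> E \<and> flip (flip e) = e \<and> flip e \<noteq> e
               \<and> src (flip e) = tgt e \<and> tgt (flip e) = src e
               \<and> tau (flip e) = (\<lambda>i. - tau e i) \<and> alpha (flip e) = - alpha e"
    and "periodic_connected nu E src tgt tau"
  shows "(\<forall>j\<in>{1..nu}. \<exists>c. band nu E src tgt tau alpha V j = {c})
     \<longleftrightarrow> (\<forall>n\<in>{1..nu}. \<forall>m. m \<noteq> (\<lambda>_. 0) \<longrightarrow> Tcoef nu E src tgt tau alpha V n m = 0)"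
proof -
  note fin = assms(2) and st = assms(3) and fl = assms(4)
  define H where "H k = fiber_op nu E src tgt tau alpha V k" for k
  define k0 :: "'d \<Rightarrow> real" where "k0 = (\<lambda>_. 0)"
  have Hc: "H k \<in> carrier_mat nu nu" for k by (simp add: H_def fiber_op_def)
  have exl: "\<exists>l. char_poly (H k) = PP l \<and> length l = nu" for k
    using char_poly_factorized[OF Hc[of k]] unfolding PP_def by blast
  define es where "es k = (SOME l. char_poly (H k) = PP l \<and> length l = nu)" for k
  have es: "char_poly (H k) = PP (es k)" "length (es k) = nu" for k
    using someI_ex[OF exl[of k]] unfolding es_def by auto
  have real: "\<forall>a\<in>#mset (es k). cnj a = a" for k
  proof
    fix a assume "a \<in># mset (es k)"
    then have "poly (char_poly (H k)) a = 0" using es(1) poly_PP_zero by simp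
    then show "cnj a = a"
      using hermitian_real_root[OF Hc[of k]] fiber_hermitian[OF fl] unfolding H_def by blast
  qed
  have bf: "band_fun nu E src tgt tau alpha V j k = sorted_list_of_multiset (image_mset Re (mset (es k))) ! (j - 1)" for j k
    unfolding band_fun_def H_def[symmetric] es(1) proots_PP ..
  have A: "(\<forall>j\<in>{1..nu}. \<exists>c. band nu E src tgt tau alpha V j = {c}) \<longleftrightarrow> (\<forall>k. mset (es k) = mset (es k0))"
  proof
    assume L: "\<forall>j\<in>{1..nu}. \<exists>c. band nu E src tgt tau alpha V j = {c}"
    show "\<forall>k. mset (es k) = mset (es k0)"
    proof
      fix k
      define SL where "SL k = sorted_list_of_multiset (image_mset Re (mset (es k)))" for k
      have len: "length (SL k) = nu" for k
      proof -
        have "length (SL k) = size (mset (SL k))" by simp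
        also have "\<dots> = nu" unfolding SL_def using es(2) by simp
        finally show ?thesis .
      qed
      have "SL k ! i = SL k0 ! i" if i: "i < nu" for i
      proof -
        obtain c where c: "band nu E src tgt tau alpha V (Suc i) = {c}" using L i by fastforce
        have "band_fun nu E src tgt tau alpha V (Suc i) k \<in> {c}" "band_fun nu E src tgt tau alpha V (Suc i) k0 \<in> {c}"
          using c unfolding band_def by (metis rangeI)+
        then show ?thesis unfolding SL_def using bf by simp
      qed
      then have "SL k = SL k0" using len by (intro nth_equalityI) auto
      then have "image_mset Re (mset (es k)) = image_mset Re (mset (es k0))"
        unfolding SL_def by (metis mset_sorted_list_of_multiset)
      then have "image_mset complex_of_real (image_mset Re (mset (es k))) = image_mset complex_of_real (image_mset Re (mset (es k0)))"
        by simp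
      then show "mset (es k) = mset (es k0)"
        using real_mset[OF real[of k]] real_mset[OF real[of k0]] by (simp add: multiset.map_comp o_def)
    qed
  next
    assume R: "\<forall>k. mset (es k) = mset (es k0)"
    show "\<forall>j\<in>{1..nu}. \<exists>c. band nu E src tgt tau alpha V j = {c}"
    proof
      fix j
      have "band_fun nu E src tgt tau alpha V j k = band_fun nu E src tgt tau alpha V j k0" for k
        unfolding bf using R[rule_format, of k] by simp
      then have "band nu E src tgt tau alpha V j = {band_fun nu E src tgt tau alpha V j k0}"
        unfolding band_def by auto
      then show "\<exists>c. band nu E src tgt tau alpha V j = {c}" by blast
    qed
  qed
  have tr: "mtr (H k ^\<^sub>m n) = PS (es k) n" for k n
    by (rule trace_pow_PP[OF Hc es(1)])
  have B: "(\<forall>k. mset (es k) = mset (es k0)) \<longleftrightarrow> (\<forall>n\<in>{1..nu}. \<forall>k. mtr (H k ^\<^sub>m n) = mtr (H k0 ^\<^sub>m n))"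
  proof
    assume "\<forall>k. mset (es k) = mset (es k0)"
    then show "\<forall>n\<in>{1..nu}. \<forall>k. mtr (H k ^\<^sub>m n) = mtr (H k0 ^\<^sub>m n)"
      unfolding tr using PS_mset by blast
  next
    assume "\<forall>n\<in>{1..nu}. \<forall>k. mtr (H k ^\<^sub>m n) = mtr (H k0 ^\<^sub>m n)"
    then have "\<forall>n\<in>{1..nu}. PS (es k) n = PS (es k0) n" for k unfolding tr by blast
    then have "PP (es k) = PP (es k0)" for k by (rule newton_PP[OF es(2) es(2)])
    then show "\<forall>k. mset (es k) = mset (es k0)" by (metis proots_PP)
  qed
  have C: "(\<forall>n\<in>{1..nu}. \<forall>k. mtr (H k ^\<^sub>m n) = mtr (H k0 ^\<^sub>m n))
     \<longleftrightarrow> (\<forall>n\<in>{1..nu}. \<forall>m. m \<noteq> (\<lambda>_. 0) \<longrightarrow> Tcoef nu E src tgt tau alpha V n m = 0)"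
  proof (intro ball_cong refl)
    fix n :: nat assume n: "n \<in> {1..nu}"
    then have n1: "n \<ge> 1" by simp
    let ?M = "MMs nu E src tgt tau n"
    let ?T = "Tcoef nu E src tgt tau alpha V n"
    have tf: "mtr (H k ^\<^sub>m n) = (\<Sum>m\<in>?M. cnj (?T m) * cis (inner_ik m k))" for k
      unfolding H_def trace_formula[OF fin st n1] by (simp add: mult.commute)
    show "(\<forall>k. mtr (H k ^\<^sub>m n) = mtr (H k0 ^\<^sub>m n)) \<longleftrightarrow> (\<forall>m. m \<noteq> (\<lambda>_. 0) \<longrightarrow> ?T m = 0)"
    proof
      assume "\<forall>k. mtr (H k ^\<^sub>m n) = mtr (H k0 ^\<^sub>m n)"
      then have "\<forall>k. (\<Sum>m\<in>?M. cnj (?T m) * cis (inner_ik m k)) = (\<Sum>m\<in>?M. cnj (?T m) * cis (inner_ik m (\<lambda>_. 0)))"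
        unfolding tf k0_def by blast
      from fourier[OF finite_MMs[OF fin] this]
      have "\<forall>m\<in>?M. m \<noteq> (\<lambda>_. 0) \<longrightarrow> ?T m = 0" by simp
      then show "\<forall>m. m \<noteq> (\<lambda>_. 0) \<longrightarrow> ?T m = 0" using Tcoef_out by blast
    next
      assume T0: "\<forall>m. m \<noteq> (\<lambda>_. 0) \<longrightarrow> ?T m = 0"
      have "mtr (H k ^\<^sub>m n) = (\<Sum>m\<in>?M. if m = (\<lambda>_. 0) then cnj (?T m) else 0)" for k
        unfolding tf by (intro sum.cong refl) (use T0 in auto)
      then show "\<forall>k. mtr (H k ^\<^sub>m n) = mtr (H k0 ^\<^sub>m n)" by simp
    qed
  qed
  show ?thesis using A B C by simp
qed


end
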